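(* Let $\sigma\in(0,0.25]$, $\pi_0\in(0,1)$, $w>0$ and $\pi^*\in(0,1)$, and let $\psi(\pi)=w$ if $\pi\ge\pi^*$ and $\psi(\pi)=0$ otherwise. Define $\pi_1(1)=\frac{(1+4\sigma)\pi_0}{1+4\sigma\pi_0}$, $\pi_1(0)=\frac{(1-4\sigma)\pi_0}{1-4\sigma\pi_0}$, $\Phi(C,\sigma,\pi_0)=0.5+2\sigma\pi_0+(0.5+2\sigma\pi_0)\psi(\pi_1(1))+(0.5-2\sigma\pi_0)\psi(\pi_1(0))$ and $\Phi(S,\sigma,\pi_0)=0.5+\psi(\pi_0)$; the expert chooses the complex rule iff $\Phi(C,\sigma,\pi_0)\ge\Phi(S,\sigma,\pi_0)$ and the simple rule otherwise. Let $$\pi^\dagger=\frac{w}{4\sigma(1+w)},\qquad \overline\pi=\frac{\pi^*}{1-4\sigma(1-\pi^* )}.$$ If $\pi^\dagger\le\pi^*$ then the expert chooses the complex rule. If $\pi^\dagger>\pi^*$ then he chooses the simple rule if and only if $\pi^*\le\pi_0<\min\{\pi^\dagger,\overline\pi\}$.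
   Context: Interpretation: the expert earns wage $w$ iff the posterior belief that he is competent is at least $\pi^*$; the complex rule yields the correct action with probability $0.5+2\sigma$ if he is competent and $0.5$ otherwise (posterior $\pi_1(Y)$ after correct $Y=1$ or incorrect $Y=0$ action), and the simple rule yields it with probability $0.5$ and leaves the posterior at the prior $\pi_0$. *)

theory Defs
  imports Complex_Main
begin

definition psi :: "real \<Rightarrow> real \<Rightarrow> real \<Rightarrow> real" where
  "psi w pistar p = (if p \<ge> pistar then w else 0)"

text \<open>Posteriors after a correct (Y=1) / incorrect (Y=0) action under the complex rule.\<close>
definition pi1_correct :: "real \<Rightarrow> real \<Rightarrow> real" where
  "pi1_correct \<sigma> \<pi>0 = ((1 + 4*\<sigma>) * \<pi>0) / (1 + 4*\<sigma>*\<pi>0)"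

definition pi1_incorrect :: "real \<Rightarrow> real \<Rightarrow> real" where
  "pi1_incorrect \<sigma> \<pi>0 = ((1 - 4*\<sigma>) * \<pi>0) / (1 - 4*\<sigma>*\<pi>0)"

definition Phi_C :: "real \<Rightarrow> real \<Rightarrow> real \<Rightarrow> real \<Rightarrow> real" where
  "Phi_C w pistar \<sigma> \<pi>0 =
     1/2 + 2*\<sigma>*\<pi>0
     + (1/2 + 2*\<sigma>*\<pi>0) * psi w pistar (pi1_correct \<sigma> \<pi>0)
     + (1/2 - 2*\<sigma>*\<pi>0) * psi w pistar (pi1_incorrect \<sigma> \<pi>0)"

definition Phi_S :: "real \<Rightarrow> real \<Rightarrow> real \<Rightarrow> real" where
  "Phi_S w pistar \<pi>0 = 1/2 + psi w pistar \<pi>0"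

definition chooses_complex :: "real \<Rightarrow> real \<Rightarrow> real \<Rightarrow> real \<Rightarrow> bool" where
  "chooses_complex w pistar \<sigma> \<pi>0 \<longleftrightarrow> Phi_C w pistar \<sigma> \<pi>0 \<ge> Phi_S w pistar \<pi>0"

definition chooses_simple :: "real \<Rightarrow> real \<Rightarrow> real \<Rightarrow> real \<Rightarrow> bool" where
  "chooses_simple w pistar \<sigma> \<pi>0 \<longleftrightarrow> \<not> chooses_complex w pistar \<sigma> \<pi>0"

definition pi_dagger :: "real \<Rightarrow> real \<Rightarrow> real" where
  "pi_dagger w \<sigma> = w / (4*\<sigma>*(1 + w))"

definition pi_bar :: "real \<Rightarrow> real \<Rightarrow> real" where
  "pi_bar pistar \<sigma> = pistar / (1 - 4*\<sigma>*(1 - pistar))"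

end

theory Submission
  imports Defs
begin

theorem proposition5:
  fixes \<sigma> \<pi>0 w pistar :: real
  assumes "0 < \<sigma>" and "\<sigma> \<le> 1/4"
    and "0 < \<pi>0" and "\<pi>0 < 1"
    and "0 < w"
    and "0 < pistar" and "pistar < 1"
  shows "(pi_dagger w \<sigma> \<le> pistar \<longrightarrow> chooses_complex w pistar \<sigma> \<pi>0)
       \<and> (pi_dagger w \<sigma> > pistar \<longrightarrow>
            (chooses_simple w pistar \<sigma> \<pi>0 \<longleftrightarrow>
               pistar \<le> \<pi>0 \<and> \<pi>0 < min (pi_dagger w \<sigma>) (pi_bar pistar \<sigma>)))"
proof -
  define s where "s = 4*\<sigma>"
  have s0: "0 < s" and s1: "s \<le> 1" using assms by (auto simp: s_def)
  have "s*\<pi>0 \<le> 1*\<pi>0" using s1 assms(3) by (intro mult_right_mono) auto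
  hence sp: "s*\<pi>0 < 1" using assms(4) by linarith
  have sp0: "0 < s*\<pi>0" using s0 assms(3) by simp
  have spp: "s*\<pi>0*\<pi>0 \<le> s*\<pi>0" using sp0 assms(4) by (simp add: mult_left_le)
  have c_ge: "pi1_correct \<sigma> \<pi>0 \<ge> \<pi>0"
    unfolding pi1_correct_def s_def[symmetric]
    using sp0 spp by (simp add: field_simps)
  have dpos: "0 < 1 - s*(1 - pistar)"
  proof -
    have "s*(1-pistar) \<le> 1*(1-pistar)" using s1 assms(7) by (intro mult_right_mono) auto
    hence "s*(1-pistar) < 1" using assms(6) by simp
    thus ?thesis by simp
  qed
  have i_iff: "pi1_incorrect \<sigma> \<pi>0 \<ge> pistar \<longleftrightarrow> \<pi>0 \<ge> pi_bar pistar \<sigma>"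
  proof -
    have "pi1_incorrect \<sigma> \<pi>0 \<ge> pistar \<longleftrightarrow> (1-s)*\<pi>0 \<ge> pistar*(1 - s*\<pi>0)"
      unfolding pi1_incorrect_def s_def[symmetric] using sp by (simp add: field_simps)
    also have "\<dots> \<longleftrightarrow> \<pi>0*(1 - s*(1 - pistar)) \<ge> pistar" by (simp add: algebra_simps)
    also have "\<dots> \<longleftrightarrow> \<pi>0 \<ge> pi_bar pistar \<sigma>"
      unfolding pi_bar_def s_def[symmetric] using dpos by (simp add: field_simps)
    finally show ?thesis .
  qed
  have dag: "\<pi>0 \<ge> pi_dagger w \<sigma> \<longleftrightarrow> s*\<pi>0*(1+w) \<ge> w"
  proof -
    have "0 < s*(1+w)" using s0 assms(5) by simp
    hence "w / (s*(1+w)) \<le> \<pi>0 \<longleftrightarrow> w \<le> \<pi>0 * (s*(1+w))" by (rule pos_divide_le_eq)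
    thus ?thesis unfolding pi_dagger_def s_def[symmetric] by (simp add: algebra_simps)
  qed
  have PC: "Phi_C w pistar \<sigma> \<pi>0 = 1/2 + s*\<pi>0/2 + (1/2 + s*\<pi>0/2) * psi w pistar (pi1_correct \<sigma> \<pi>0)
     + (1/2 - s*\<pi>0/2) * psi w pistar (pi1_incorrect \<sigma> \<pi>0)"
    unfolding Phi_C_def s_def by (simp add: algebra_simps)
  have key: "chooses_simple w pistar \<sigma> \<pi>0 \<longleftrightarrow>
      pistar \<le> \<pi>0 \<and> \<pi>0 < pi_dagger w \<sigma> \<and> \<pi>0 < pi_bar pistar \<sigma>"
  proof (cases "pistar \<le> \<pi>0")
    case False
    have "psi w pistar (pi1_correct \<sigma> \<pi>0) \<ge> 0" "psi w pistar (pi1_incorrect \<sigma> \<pi>0) \<ge> 0"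
      using assms(5) by (auto simp: psi_def)
    moreover have "1/2 + s*\<pi>0/2 \<ge> 0" "1/2 - s*\<pi>0/2 \<ge> 0" using sp sp0 by auto
    ultimately have "(1/2 + s*\<pi>0/2) * psi w pistar (pi1_correct \<sigma> \<pi>0) \<ge> 0"
       "(1/2 - s*\<pi>0/2) * psi w pistar (pi1_incorrect \<sigma> \<pi>0) \<ge> 0" by auto
    hence "Phi_C w pistar \<sigma> \<pi>0 \<ge> 1/2" unfolding PC using sp0 by linarith
    thus ?thesis using False by (auto simp: chooses_simple_def chooses_complex_def Phi_S_def psi_def)
  next
    case True
    have c: "psi w pistar (pi1_correct \<sigma> \<pi>0) = w" using True c_ge by (auto simp: psi_def)
    show ?thesis
    proof (cases "\<pi>0 \<ge> pi_bar pistar \<sigma>")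
      case True2: True
      have "psi w pistar (pi1_incorrect \<sigma> \<pi>0) = w" using i_iff True2 by (auto simp: psi_def)
      hence "Phi_C w pistar \<sigma> \<pi>0 = 1/2 + s*\<pi>0/2 + w" unfolding PC c by (simp add: algebra_simps)
      thus ?thesis using True True2 sp0
        by (auto simp: chooses_simple_def chooses_complex_def Phi_S_def psi_def)
    next
      case False2: False
      have "psi w pistar (pi1_incorrect \<sigma> \<pi>0) = 0" using i_iff False2 by (auto simp: psi_def)
      hence "Phi_C w pistar \<sigma> \<pi>0 = 1/2 + s*\<pi>0/2 + (1/2 + s*\<pi>0/2)*w" unfolding PC c by simp
      hence "chooses_complex w pistar \<sigma> \<pi>0 \<longleftrightarrow> s*\<pi>0*(1+w) \<ge> w"
      proof -
        assume h: "Phi_C w pistar \<sigma> \<pi>0 = 1/2 + s*\<pi>0/2 + (1/2 + s*\<pi>0/2)*w"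
        have "chooses_complex w pistar \<sigma> \<pi>0 \<longleftrightarrow> 1/2 + s*\<pi>0/2 + (1/2 + s*\<pi>0/2)*w \<ge> 1/2 + w"
          using True h by (simp add: chooses_complex_def Phi_S_def psi_def)
        also have "\<dots> \<longleftrightarrow> s*\<pi>0*(1+w) \<ge> w"
        proof -
          have "1/2 + s*\<pi>0/2 + (1/2 + s*\<pi>0/2)*w - (1/2 + w) = (s*\<pi>0*(1+w) - w)/2"
            by (simp add: algebra_simps)
          thus ?thesis by auto
        qed
        finally show ?thesis .
      qed
      thus ?thesis using True False2 dag by (auto simp: chooses_simple_def)
    qed
  qed
  show ?thesis using key unfolding chooses_simple_def by auto
qed

end
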